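(* Let $\mathsf{op}_0\mathsf{op}_1\cdots\mathsf{op}_n$ be a nonempty sequence over the alphabet $\{\uparrow_1,\uparrow_2,\downarrow_1,\downarrow_2,\Downarrow\}$ which is valid, i.e. applying the operations successively to the empty order-2 stack $[[\,]]$ is defined at every step. Let $L_1$ and $L_2$ be the languages generated by the nonterminals $S_1$ and $S_2$ of the context-free grammar $$S_1 \to \uparrow_1 \mid S_1\uparrow_2 \mid S_1S_1\downarrow_1 \mid S_1S_2\downarrow_2 \mid S_1S_2S_1\Downarrow,\qquad S_2\to \uparrow_2 \mid S_2\uparrow_1 \mid S_2\downarrow_1 \mid S_2S_2\downarrow_2 \mid S_2S_2S_1\Downarrow .$$ Then for all $0\le i\le j\le n$: (P1) $\mathsf{push}_1(j)=i$ iff $\mathsf{op}_i\cdots\mathsf{op}_j\in L_1$; (P2) $\mathsf{Push}_2(j)=i$ iff $\mathsf{op}_i\cdots\mathsf{op}_j\in L_2$; (P3) $\mathsf{push}_1(j)=-1$ iff $\mathsf{op}_k\cdots\mathsf{op}_j\notin L_1$ for all $0\le k\le j$; (P4) $\mathsf{Push}_2(j)=-1$ iff $\mathsf{op}_k\cdots\mathsf{op}_j\notin L_2$ for all $0\le k\le j$.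
   Context: Order-2 collapsible stacks over a finite set $S$ of stack symbols: an order-2 stack is $W=[[u_1][u_2]\cdots[u_n]]$ ($n\ge1$) where each $u_i$ is a word over $S\times\{0,1,\dots,i-1\}$ (the second component is a collapse link to the index of a stack below). The empty order-2 stack is $[[\,]]$ (one empty order-1 stack). Operations: $\uparrow_2$ (order-2 push) duplicates the topmost stack: $[[u_1]\cdots[u_n]]\mapsto[[u_1]\cdots[u_n][u_n]]$; $\downarrow_2$ (order-2 pop) removes the topmost stack, undefined if $n=1$; $\uparrow_1$ (order-1 push of some symbol $s$, the symbol being irrelevant here) maps $[[u_1]\cdots[u_n]]$ to $[[u_1]\cdots[u_n(s,n-1)]]$; $\downarrow_1$ (order-1 pop) removes the last letter of $u_n$, undefined if $u_n$ is empty; $\Downarrow$ (collapse): if $u_n=u_n'(s,i)$ then $[[u_1]\cdots[u_n]]\mapsto[[u_1]\cdots[u_i]]$ (undefined if $u_n$ empty or $i=0$). For a valid sequence and $0\le j\le n$, $\mathsf{push}_1(j)$ is the position $i$ of the $\uparrow_1$ operation that pushed the top symbol of the top order-1 stack present after executing $\mathsf{op}_j$, and $\mathsf{push}_1(j)=-1$ if that top order-1 stack is empty; $\mathsf{Push}_2(j)$ is the position of the $\uparrow_2$ operation that pushed (duplicated) the top order-1 stack present after executing $\mathsf{op}_j$, and $\mathsf{Push}_2(j)=-1$ if the order-2 stack then contains only one order-1 stack. *)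

theory Defs
  imports Main
begin

datatype op = Up1 | Up2 | Down1 | Down2 | Collapse

text \<open>An order-1 stack entry records its collapse link and the position of the
  order-1 push that created it (the stack symbol itself is irrelevant and omitted).
  An order-1 stack inside an order-2 stack is tagged with the position of the
  order-2 push that created it (-1 for the initial order-1 stack).
  The order-2 stack is a list, bottom first.\<close>

type_synonym entry = "nat \<times> nat"
type_synonym stack1 = "int \<times> entry list"
type_synonym stack2 = "stack1 list"

definition empty2 :: stack2 where "empty2 = [(-1, [])]"

fun step :: "nat \<Rightarrow> op \<Rightarrow> stack2 \<Rightarrow> stack2 option" where
  "step p Up1 W = (if W = [] then None else
      Some (butlast W @ [(fst (last W), snd (last W) @ [(length W - 1, p)])]))"
| "step p Up2 W = (if W = [] then None else Some (W @ [(int p, snd (last W))]))"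
| "step p Down2 W = (if length W \<le> 1 then None else Some (butlast W))"
| "step p Down1 W = (if W = [] \<or> snd (last W) = [] then None else
      Some (butlast W @ [(fst (last W), butlast (snd (last W)))]))"
| "step p Collapse W = (if W = [] \<or> snd (last W) = [] \<or> fst (last (snd (last W))) = 0 then None
      else Some (take (fst (last (snd (last W)))) W))"

fun exec_from :: "nat \<Rightarrow> op list \<Rightarrow> stack2 \<Rightarrow> stack2 option" where
  "exec_from p [] W = Some W"
| "exec_from p (x # xs) W = (case step p x W of None \<Rightarrow> None | Some W' \<Rightarrow> exec_from (Suc p) xs W')"

definition valid :: "op list \<Rightarrow> bool" where
  "valid ops \<longleftrightarrow> exec_from 0 ops empty2 \<noteq> None"

text \<open>The order-2 stack present after executing op_j (i.e. after op_0 ... op_j).\<close>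
definition state_after :: "op list \<Rightarrow> nat \<Rightarrow> stack2" where
  "state_after ops j = the (exec_from 0 (take (Suc j) ops) empty2)"

definition push1 :: "op list \<Rightarrow> nat \<Rightarrow> int" where
  "push1 ops j = (let w = snd (last (state_after ops j)) in
      if w = [] then -1 else int (snd (last w)))"

definition Push2 :: "op list \<Rightarrow> nat \<Rightarrow> int" where
  "Push2 ops j = (let W = state_after ops j in
      if length W = 1 then -1 else fst (last W))"

inductive L1 :: "op list \<Rightarrow> bool" and L2 :: "op list \<Rightarrow> bool" where
  "L1 [Up1]"
| "L1 x \<Longrightarrow> L1 (x @ [Up2])"
| "L1 x \<Longrightarrow> L1 y \<Longrightarrow> L1 (x @ y @ [Down1])"
| "L1 x \<Longrightarrow> L2 y \<Longrightarrow> L1 (x @ y @ [Down2])"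
| "L1 x \<Longrightarrow> L2 y \<Longrightarrow> L1 z \<Longrightarrow> L1 (x @ y @ z @ [Collapse])"
| "L2 [Up2]"
| "L2 x \<Longrightarrow> L2 (x @ [Up1])"
| "L2 x \<Longrightarrow> L2 (x @ [Down1])"
| "L2 x \<Longrightarrow> L2 y \<Longrightarrow> L2 (x @ y @ [Down2])"
| "L2 x \<Longrightarrow> L2 y \<Longrightarrow> L1 z \<Longrightarrow> L2 (x @ y @ z @ [Collapse])"

definition seg :: "op list \<Rightarrow> nat \<Rightarrow> nat \<Rightarrow> op list" where
  "seg ops i j = drop i (take (Suc j) ops)"

end

theory Submission
  imports Defs
begin


lemma exec_append: "exec_from p (xs @ ys) W = (case exec_from p xs W of None \<Rightarrow> None | Some W' \<Rightarrow> exec_from (p + length xs) ys W')"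
  by (induction xs arbitrary: p W) (auto split: option.splits)

definition St :: "op list \<Rightarrow> nat \<Rightarrow> stack2" where
  "St ops k = the (exec_from 0 (take k ops) empty2)"

definition sg :: "op list \<Rightarrow> nat \<Rightarrow> nat \<Rightarrow> op list" where
  "sg ops a b = drop a (take b ops)"

lemma exec_take_Some: assumes "valid ops" "k \<le> length ops"
  shows "exec_from 0 (take k ops) empty2 = Some (St ops k)"
proof -
  have "exec_from 0 (take k ops @ drop k ops) empty2 \<noteq> None" using assms(1) by (simp add: valid_def)
  then show ?thesis unfolding St_def exec_append by (auto split: option.splits)
qed

lemma St_Suc: assumes "valid ops" "k < length ops"
  shows "step k (ops!k) (St ops k) = Some (St ops (Suc k))"
proof -
  have "take (Suc k) ops = take k ops @ [ops!k]" using assms(2) by (simp add: take_Suc_conv_app_nth)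
  then have "exec_from 0 (take k ops @ [ops!k]) empty2 = Some (St ops (Suc k))"
    using exec_take_Some[OF assms(1), of "Suc k"] assms(2) by simp
  then show ?thesis using exec_take_Some[OF assms(1), of k] assms(2)
    by (simp add: exec_append split: option.splits)
qed

lemma St_0: "St ops 0 = empty2" by (simp add: St_def)

definition inv :: "(nat \<Rightarrow> stack2) \<Rightarrow> nat \<Rightarrow> stack2 \<Rightarrow> bool" where
"inv H k W \<longleftrightarrow> W \<noteq> [] \<and> fst (W!0) = -1 \<and>
 (\<forall>m. 0<m \<and> m < length W \<longrightarrow> (\<exists>t<k. fst (W!m) = int t \<and> take m W = H t)) \<and>
 (\<forall>m<length W. \<forall>a<length (snd (W!m)). snd (snd (W!m)!a) < k \<and> fst (snd (W!m)!a) \<le> m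
   \<and> take a (snd (W!m)) = snd (last (H (snd (snd (W!m)!a))))
   \<and> take (fst (snd (W!m)!a)) W = butlast (H (snd (snd (W!m)!a))))"

lemma inv_0: "inv H 0 empty2" unfolding inv_def empty2_def by auto

lemma inv_mono_k: "inv H k W \<Longrightarrow> k \<le> k' \<Longrightarrow> inv H k' W"
proof -
  assume a: "inv H k W" "k \<le> k'"
  show ?thesis using a(1) unfolding inv_def
    apply (elim conjE, intro conjI)
       apply simp
      apply simp
     apply (metis a(2) order.strict_trans2)
    by (meson a(2) order.strict_trans2)
qed

lemma inv_Up1:
  assumes "inv H k W" "H k = W" "step k Up1 W = Some W'"
  shows "inv H (Suc k) W'"
proof -
  obtain V f w where W: "W = V @ [(f,w)]" using assms(1) unfolding inv_def
    by (metis rev_exhaust surj_pair)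
  have W': "W' = V @ [(f, w @ [(length V, k)])]" using assms(3) W by auto
  have I: "inv H (Suc k) W" using inv_mono_k[OF assms(1)] by simp
  have c1: "W' \<noteq> []" using W' by simp
  have c2: "fst (W'!0) = -1" using I W W' unfolding inv_def by (cases V) auto
  have c3: "\<forall>m. 0<m \<and> m < length W' \<longrightarrow> (\<exists>t<Suc k. fst (W'!m) = int t \<and> take m W' = H t)"
  proof (intro allI impI)
    fix m assume m: "0 < m \<and> m < length W'"
    then have "m < length W" using W W' by simp
    moreover have "fst (W'!m) = fst (W!m)" "take m W' = take m W"
      using m W W' by (auto simp: nth_append)
    ultimately show "\<exists>t<Suc k. fst (W'!m) = int t \<and> take m W' = H t"
      using I m unfolding inv_def by metis
  qed
  have c4: "\<forall>m<length W'. \<forall>a<length (snd (W'!m)). snd (snd (W'!m)!a) < Suc k \<and> fst (snd (W'!m)!a) \<le> m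
   \<and> take a (snd (W'!m)) = snd (last (H (snd (snd (W'!m)!a))))
   \<and> take (fst (snd (W'!m)!a)) W' = butlast (H (snd (snd (W'!m)!a)))"
  proof (intro allI impI)
    fix m a assume m: "m < length W'" and a: "a < length (snd (W'!m))"
    show "snd (snd (W'!m)!a) < Suc k \<and> fst (snd (W'!m)!a) \<le> m
   \<and> take a (snd (W'!m)) = snd (last (H (snd (snd (W'!m)!a))))
   \<and> take (fst (snd (W'!m)!a)) W' = butlast (H (snd (snd (W'!m)!a)))"
    proof (cases "m < length V")
      case True
      then have e: "W'!m = W!m" using W W' by (simp add: nth_append)
      have "m < length W" using W True by simp
      with I a e have P: "snd (snd (W!m)!a) < Suc k \<and> fst (snd (W!m)!a) \<le> m
   \<and> take a (snd (W!m)) = snd (last (H (snd (snd (W!m)!a))))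
   \<and> take (fst (snd (W!m)!a)) W = butlast (H (snd (snd (W!m)!a)))"
        unfolding inv_def by auto
      have "take (fst (snd (W!m)!a)) W' = take (fst (snd (W!m)!a)) W"
        using P True W W' by auto
      then show ?thesis using P e by simp
    next
      case False
      then have mV: "m = length V" using m W' by simp
      then have e: "W'!m = (f, w @ [(length V, k)])" using W' by simp
      show ?thesis
      proof (cases "a < length w")
        case True
        have "length V < length W" "W!length V = (f,w)" using W by auto
        with I True have P: "snd (w!a) < Suc k \<and> fst (w!a) \<le> m
          \<and> take a w = snd (last (H (snd (w!a))))
          \<and> take (fst (w!a)) W = butlast (H (snd (w!a)))"
          unfolding inv_def using mV by (metis snd_conv)
        have "take (fst (w!a)) W' = take (fst (w!a)) W" using P mV W W' by auto
        then show ?thesis using P e True by (simp add: nth_append)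
      next
        case False
        then have "a = length w" using a e by simp
        then show ?thesis using e mV W W' assms(2) by simp
      qed
    qed
  qed
  show ?thesis unfolding inv_def using c1 c2 c3 c4 by blast
qed




lemma inv_take:
  assumes I: "inv H k W" and n: "0 < n"
  shows "inv H k (take n W)"
proof -
  let ?W = "take n W"
  have c1: "?W \<noteq> []" using I n unfolding inv_def by simp
  have c2: "fst (?W!0) = -1" using I n unfolding inv_def by simp
  have c3: "\<forall>m. 0<m \<and> m < length ?W \<longrightarrow> (\<exists>t<k. fst (?W!m) = int t \<and> take m ?W = H t)"
  proof (intro allI impI)
    fix m assume m: "0 < m \<and> m < length ?W"
    then have "m < length W" "?W!m = W!m" "take m ?W = take m W" by auto
    then show "\<exists>t<k. fst (?W!m) = int t \<and> take m ?W = H t" using I m unfolding inv_def by metis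
  qed
  have c4: "\<forall>m<length ?W. \<forall>a<length (snd (?W!m)). snd (snd (?W!m)!a) < k \<and> fst (snd (?W!m)!a) \<le> m
   \<and> take a (snd (?W!m)) = snd (last (H (snd (snd (?W!m)!a))))
   \<and> take (fst (snd (?W!m)!a)) ?W = butlast (H (snd (snd (?W!m)!a)))"
  proof (intro allI impI)
    fix m a assume m: "m < length ?W" and a: "a < length (snd (?W!m))"
    then have mm: "m < length W" "?W!m = W!m" by auto
    with I a have P: "snd (snd (W!m)!a) < k \<and> fst (snd (W!m)!a) \<le> m
   \<and> take a (snd (W!m)) = snd (last (H (snd (snd (W!m)!a))))
   \<and> take (fst (snd (W!m)!a)) W = butlast (H (snd (snd (W!m)!a)))" unfolding inv_def by auto
    have "fst (snd (W!m)!a) \<le> n" using P m by simp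
    then have "take (fst (snd (W!m)!a)) ?W = take (fst (snd (W!m)!a)) W" by (simp add: min_def)
    then show "snd (snd (?W!m)!a) < k \<and> fst (snd (?W!m)!a) \<le> m
   \<and> take a (snd (?W!m)) = snd (last (H (snd (snd (?W!m)!a))))
   \<and> take (fst (snd (?W!m)!a)) ?W = butlast (H (snd (snd (?W!m)!a)))" using P mm by simp
  qed
  show ?thesis unfolding inv_def using c1 c2 c3 c4 by blast
qed

lemma inv_prefix_top:
  assumes I: "inv H k W" and W: "W = V @ [(f,w)]"
  shows "inv H k (V @ [(f, take n w)])"
proof -
  let ?W = "V @ [(f, take n w)]"
  have c1: "?W \<noteq> []" by simp
  have c2: "fst (?W!0) = -1" using I W unfolding inv_def by (cases V) auto
  have c3: "\<forall>m. 0<m \<and> m < length ?W \<longrightarrow> (\<exists>t<k. fst (?W!m) = int t \<and> take m ?W = H t)"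
  proof (intro allI impI)
    fix m assume m: "0 < m \<and> m < length ?W"
    then have "m < length W" "fst (?W!m) = fst (W!m)" "take m ?W = take m W"
      using W by (auto simp: nth_append)
    then show "\<exists>t<k. fst (?W!m) = int t \<and> take m ?W = H t" using I m unfolding inv_def by metis
  qed
  have c4: "\<forall>m<length ?W. \<forall>a<length (snd (?W!m)). snd (snd (?W!m)!a) < k \<and> fst (snd (?W!m)!a) \<le> m
   \<and> take a (snd (?W!m)) = snd (last (H (snd (snd (?W!m)!a))))
   \<and> take (fst (snd (?W!m)!a)) ?W = butlast (H (snd (snd (?W!m)!a)))"
  proof (intro allI impI)
    fix m a assume m: "m < length ?W" and a: "a < length (snd (?W!m))"
    have mm: "m < length W" using m W by simp
    have a': "a < length (snd (W!m))" and e: "snd (?W!m) ! a = snd (W!m) ! a"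
      and tk: "take a (snd (?W!m)) = take a (snd (W!m))"
      using a W m by (auto simp: nth_append split: if_splits)
    from I mm a' have P: "snd (snd (W!m)!a) < k \<and> fst (snd (W!m)!a) \<le> m
   \<and> take a (snd (W!m)) = snd (last (H (snd (snd (W!m)!a))))
   \<and> take (fst (snd (W!m)!a)) W = butlast (H (snd (snd (W!m)!a)))" unfolding inv_def by blast
    have "take (fst (snd (W!m)!a)) ?W = take (fst (snd (W!m)!a)) W" using P m W by auto
    then show "snd (snd (?W!m)!a) < k \<and> fst (snd (?W!m)!a) \<le> m
   \<and> take a (snd (?W!m)) = snd (last (H (snd (snd (?W!m)!a))))
   \<and> take (fst (snd (?W!m)!a)) ?W = butlast (H (snd (snd (?W!m)!a)))" using P e tk by simp
  qed
  show ?thesis unfolding inv_def using c1 c2 c3 c4 by blast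
qed

lemma inv_Up2:
  assumes I: "inv H k W" and Hk: "H k = W"
  shows "inv H (Suc k) (W @ [(int k, snd (last W))])"
proof -
  let ?W = "W @ [(int k, snd (last W))]"
  have I': "inv H (Suc k) W" using inv_mono_k[OF I] by simp
  have ne: "W \<noteq> []" using I unfolding inv_def by simp
  have c1: "?W \<noteq> []" by simp
  have c2: "fst (?W!0) = -1" using I ne unfolding inv_def by (simp add: nth_append)
  have c3: "\<forall>m. 0<m \<and> m < length ?W \<longrightarrow> (\<exists>t<Suc k. fst (?W!m) = int t \<and> take m ?W = H t)"
  proof (intro allI impI)
    fix m assume m: "0 < m \<and> m < length ?W"
    show "\<exists>t<Suc k. fst (?W!m) = int t \<and> take m ?W = H t"
    proof (cases "m < length W")
      case True
      then have "fst (?W!m) = fst (W!m)" "take m ?W = take m W" by (auto simp: nth_append)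
      then show ?thesis using I' m True unfolding inv_def by metis
    next
      case False
      then have "m = length W" using m by simp
      then show ?thesis using Hk by simp
    qed
  qed
  have c4: "\<forall>m<length ?W. \<forall>a<length (snd (?W!m)). snd (snd (?W!m)!a) < Suc k \<and> fst (snd (?W!m)!a) \<le> m
   \<and> take a (snd (?W!m)) = snd (last (H (snd (snd (?W!m)!a))))
   \<and> take (fst (snd (?W!m)!a)) ?W = butlast (H (snd (snd (?W!m)!a)))"
  proof (intro allI impI)
    fix m a assume m: "m < length ?W" and a: "a < length (snd (?W!m))"
    define m' where "m' = (if m < length W then m else length W - 1)"
    have m': "m' < length W" "m' \<le> m" "snd (?W!m) = snd (W!m')" using m ne
      by (auto simp: m'_def nth_append last_conv_nth)
    from I' m'(1) a m'(3) have P: "snd (snd (W!m')!a) < Suc k \<and> fst (snd (W!m')!a) \<le> m'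
   \<and> take a (snd (W!m')) = snd (last (H (snd (snd (W!m')!a))))
   \<and> take (fst (snd (W!m')!a)) W = butlast (H (snd (snd (W!m')!a)))" unfolding inv_def by auto
    have "take (fst (snd (W!m')!a)) ?W = take (fst (snd (W!m')!a)) W" using P m'(1) by auto
    then show "snd (snd (?W!m)!a) < Suc k \<and> fst (snd (?W!m)!a) \<le> m
   \<and> take a (snd (?W!m)) = snd (last (H (snd (snd (?W!m)!a))))
   \<and> take (fst (snd (?W!m)!a)) ?W = butlast (H (snd (snd (?W!m)!a)))" using P m' by simp
  qed
  show ?thesis unfolding inv_def using c1 c2 c3 c4 by blast
qed

lemma inv_step:
  assumes I: "inv H k W" and Hk: "H k = W" and s: "step k x W = Some W'"
  shows "inv H (Suc k) W'"
proof (cases x)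
  case Up1 then show ?thesis using inv_Up1 assms by simp
next
  case Up2 then show ?thesis using inv_Up2[OF I Hk] s by (auto split: if_splits)
next
  case Down2
  then have "W' = take (length W - 1) W" "0 < length W - 1" using s by (auto simp: butlast_conv_take split: if_splits)
  then show ?thesis using inv_take[OF I, of "length W - 1"] inv_mono_k[of H k _ "Suc k"] by simp
next
  case Collapse
  then have "W' = take (fst (last (snd (last W)))) W" "0 < fst (last (snd (last W)))" using s by (auto split: if_splits)
  then show ?thesis using inv_take[OF I, of "fst (last (snd (last W)))"] inv_mono_k[of H k _ "Suc k"] by simp
next
  case Down1
  obtain V f w where W: "W = V @ [(f,w)]" using I unfolding inv_def
    by (metis rev_exhaust surj_pair)
  have "W' = V @ [(f, take (length w - 1) w)]" using s W Down1 by (auto simp: butlast_conv_take split: if_splits)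
  then show ?thesis using inv_prefix_top[OF I W, of "length w - 1"] inv_mono_k[of H k _ "Suc k"] by simp
qed

lemma inv_St: assumes "valid ops" "k \<le> length ops" shows "inv (St ops) k (St ops k)"
  using assms(2)
proof (induction k)
  case 0 then show ?case using inv_0 St_0 by metis
next
  case (Suc k)
  then have "k < length ops" by simp
  then show ?case using inv_step[OF Suc.IH[OF Suc_leD[OF Suc.prems]] refl St_Suc[OF assms(1)]] by simp
qed




lemma inv_top_entry:
  assumes I: "inv H k W" and ne: "snd (last W) \<noteq> []"
  shows "snd (last (snd (last W))) < k \<and> butlast (snd (last W)) = snd (last (H (snd (last (snd (last W))))))
     \<and> take (fst (last (snd (last W)))) W = butlast (H (snd (last (snd (last W)))))"
proof -
  have Wne: "W \<noteq> []" using I unfolding inv_def by simp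
  define m where "m = length W - 1"
  define w where "w = snd (last W)"
  define a where "a = length w - 1"
  have m: "m < length W" "last W = W!m" using Wne by (auto simp: m_def last_conv_nth)
  have a: "a < length w" "last w = w!a" "butlast w = take a w" using ne
    by (auto simp: a_def w_def last_conv_nth butlast_conv_take)
  have "a < length (snd (W!m))" using a m w_def by simp
  with I m(1) have "snd (snd (W!m)!a) < k \<and> fst (snd (W!m)!a) \<le> m
   \<and> take a (snd (W!m)) = snd (last (H (snd (snd (W!m)!a))))
   \<and> take (fst (snd (W!m)!a)) W = butlast (H (snd (snd (W!m)!a)))" unfolding inv_def by blast
  then show ?thesis using m a w_def by simp
qed

lemma inv_top_tag:
  assumes I: "inv H k W" and l: "2 \<le> length W"
  shows "\<exists>t<k. fst (last W) = int t \<and> butlast W = H t"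
proof -
  define m where "m = length W - 1"
  have ne: "W \<noteq> []" using l by auto
  have m: "0 < m" "m < length W" "last W = W!m" "butlast W = take m W" using l
    by (auto simp: m_def last_conv_nth[OF ne] butlast_conv_take)
  then show ?thesis using I unfolding inv_def by metis
qed

lemma inv_len1:
  assumes I: "inv H k W" and l: "length W = 1"
  shows "fst (last W) = -1"
  using I l unfolding inv_def by (cases W) auto

lemma inv_tag_len:
  assumes I: "inv H k W" and t: "fst (last W) = int t"
  shows "2 \<le> length W"
proof -
  have "W \<noteq> []" using I unfolding inv_def by simp
  moreover have "length W \<noteq> 1" using inv_len1[OF I] t by auto
  ultimately show ?thesis by (cases W) (auto simp: Suc_le_eq)
qed

lemma sg_len: "b \<le> length ops \<Longrightarrow> length (sg ops a b) = b - a"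
  by (simp add: sg_def)

lemma sg_app: assumes "a \<le> b" "b \<le> c" "c \<le> length ops" shows "sg ops a b @ sg ops b c = sg ops a c"
proof -
  have e1: "take c ops = take b ops @ drop b (take c ops)"
    using assms by (metis append_take_drop_id min.absorb1 take_take)
  have L: "length (take b ops) = b" using assms by simp
  have e2: "drop a (take b ops @ drop b (take c ops)) = drop a (take b ops) @ drop b (take c ops)"
    using L assms(1) by simp
  have "drop a (take c ops) = drop a (take b ops) @ drop b (take c ops)"
    using arg_cong[OF e1, of "drop a"] e2 by simp
  then show ?thesis unfolding sg_def by simp
qed

lemma sg_snoc: "a \<le> b \<Longrightarrow> b < length ops \<Longrightarrow> sg ops a (Suc b) = sg ops a b @ [ops!b]"
  unfolding sg_def by (simp add: take_Suc_conv_app_nth)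

lemma sg_split:
  assumes "sg ops a c = xs @ ys" "c \<le> length ops" "a \<le> c"
  shows "sg ops a (a + length xs) = xs \<and> sg ops (a + length xs) c = ys \<and> a + length xs \<le> c"
proof -
  have L: "c - a = length xs + length ys" using sg_len[OF assms(2), of a] assms(1) by simp
  then have le: "a + length xs \<le> c" using assms(3) by simp
  have "sg ops a (a + length xs) @ sg ops (a + length xs) c = xs @ ys"
    using sg_app[of a "a + length xs" c ops] le assms by simp
  moreover have "length (sg ops a (a + length xs)) = length xs" using sg_len assms(2) le by simp
  ultimately show ?thesis using le by simp
qed

lemma sg_last:
  assumes "sg ops a c = xs @ [x]" "c \<le> length ops"
  shows "c = Suc (a + length xs) \<and> ops ! (a + length xs) = x \<and> sg ops a (a + length xs) = xs"
proof -
  have "a \<le> c" proof (rule ccontr)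
    assume "\<not> a \<le> c" then have "sg ops a c = []" unfolding sg_def by simp
    then show False using assms(1) by simp
  qed
  then have s: "sg ops a (a + length xs) = xs" "sg ops (a + length xs) c = [x]" "a + length xs \<le> c"
    using sg_split[OF assms] by auto
  have "c - (a + length xs) = 1" using sg_len[OF assms(2), of "a + length xs"] s(2) by simp
  then have c: "c = Suc (a + length xs)" using s(3) by simp
  then have "sg ops (a + length xs) c = [ops ! (a + length xs)]"
    using assms(2) unfolding sg_def by (simp add: take_Suc_conv_app_nth)
  then show ?thesis using s c by simp
qed

context
  fixes ops :: "op list"
  assumes V: "valid ops"
begin

abbreviation "S \<equiv> St ops"

lemma S_ne: "k \<le> length ops \<Longrightarrow> S k \<noteq> []"
  using inv_St[OF V] unfolding inv_def by blast

lemma St_Up1: "e < length ops \<Longrightarrow> ops!e = Up1 \<Longrightarrow>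
   snd (last (S (Suc e))) = snd (last (S e)) @ [(length (S e) - 1, e)] \<and> fst (last (S (Suc e))) = fst (last (S e))"
proof -
  assume a: "e < length ops" "ops!e = Up1"
  then have "S (Suc e) = butlast (S e) @ [(fst (last (S e)), snd (last (S e)) @ [(length (S e) - 1, e)])]"
    using St_Suc[OF V, of e] S_ne[of e] by (auto split: if_splits)
  then show ?thesis by simp
qed

lemma St_Up2: "e < length ops \<Longrightarrow> ops!e = Up2 \<Longrightarrow> S (Suc e) = S e @ [(int e, snd (last (S e)))]"
  using St_Suc[OF V, of e] S_ne[of e] by (auto split: if_splits)

lemma St_Down1: "e < length ops \<Longrightarrow> ops!e = Down1 \<Longrightarrow>
   snd (last (S e)) \<noteq> [] \<and> snd (last (S (Suc e))) = butlast (snd (last (S e))) \<and> fst (last (S (Suc e))) = fst (last (S e))"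
proof -
  assume a: "e < length ops" "ops!e = Down1"
  then have "snd (last (S e)) \<noteq> [] \<and> S (Suc e) = butlast (S e) @ [(fst (last (S e)), butlast (snd (last (S e))))]"
    using St_Suc[OF V, of e] S_ne[of e] by (auto split: if_splits)
  then show ?thesis by simp
qed

lemma St_Down2: "e < length ops \<Longrightarrow> ops!e = Down2 \<Longrightarrow> S (Suc e) = butlast (S e) \<and> 2 \<le> length (S e)"
  using St_Suc[OF V, of e] by (auto split: if_splits)

lemma St_Collapse: "e < length ops \<Longrightarrow> ops!e = Collapse \<Longrightarrow>
   snd (last (S e)) \<noteq> [] \<and> 0 < fst (last (snd (last (S e)))) \<and> S (Suc e) = take (fst (last (snd (last (S e))))) (S e)"
  using St_Suc[OF V, of e] by (auto split: if_splits)

lemma IS: "k \<le> length ops \<Longrightarrow> inv S k (S k)" using inv_St[OF V] by simp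

end




lemma sg_dec1:
  assumes "sg ops i (i + length (x @ [c])) = x @ [c]" "i + length (x @ [c]) \<le> length ops"
  shows "sg ops i (i + length x) = x \<and> ops!(i + length x) = c"
  using sg_last[OF assms(1)] assms(2) by simp

lemma sg_dec2:
  assumes "sg ops i (i + length (x @ y @ [c])) = x @ y @ [c]" "i + length (x @ y @ [c]) \<le> length ops"
  shows "sg ops i (i + length x) = x \<and> sg ops (i + length x) (i + length x + length y) = y
    \<and> ops!(i + length x + length y) = c"
proof -
  have "sg ops i (i + length (x @ y @ [c])) = (x @ y) @ [c]" using assms(1) by simp
  from sg_last[OF this assms(2)] have a: "ops ! (i + length (x@y)) = c" "sg ops i (i + length (x@y)) = x @ y" by auto
  have b: "i + length (x@y) \<le> length ops" using assms(2) by simp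
  from sg_split[OF a(2) b] a(1) show ?thesis by (simp add: add.assoc)
qed

lemma sg_dec3:
  assumes "sg ops i (i + length (x @ y @ z @ [c])) = x @ y @ z @ [c]" "i + length (x @ y @ z @ [c]) \<le> length ops"
  shows "sg ops i (i + length x) = x \<and> sg ops (i + length x) (i + length x + length y) = y
    \<and> sg ops (i + length x + length y) (i + length x + length y + length z) = z
    \<and> ops!(i + length x + length y + length z) = c"
proof -
  have "sg ops i (i + length (x @ y @ z @ [c])) = (x @ y @ z) @ [c]" using assms(1) by simp
  from sg_last[OF this assms(2)] have a: "ops ! (i + length (x@y@z)) = c" "sg ops i (i + length (x@y@z)) = x @ y @ z" by auto
  have b: "i + length (x@y@z) \<le> length ops" using assms(2) by simp
  from sg_split[OF a(2) b] have c: "sg ops i (i + length x) = x" "sg ops (i + length x) (i + length (x@y@z)) = y @ z"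
    by auto
  have b2: "i + length x \<le> i + length (x@y@z)" by simp
  from sg_split[OF c(2) b] have "sg ops (i + length x) (i + length x + length y) = y"
     "sg ops (i + length x + length y) (i + length (x @ y @ z)) = z" by auto
  then show ?thesis using a c by (simp add: add.assoc)
qed

context
  fixes ops :: "op list"
  assumes V: "valid ops"
begin

lemma sound:
  shows "L1 w \<Longrightarrow> \<forall>i. i + length w \<le> length ops \<and> sg ops i (i + length w) = w \<longrightarrow>
     snd (last (St ops (i + length w))) \<noteq> [] \<and> snd (last (snd (last (St ops (i + length w))))) = i"
  and "L2 w \<Longrightarrow> \<forall>i. i + length w \<le> length ops \<and> sg ops i (i + length w) = w \<longrightarrow>
     fst (last (St ops (i + length w))) = int i"
proof (induction w and w rule: L1_L2.inducts)
  case 1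
  then show ?case using St_Up1[OF V] sg_dec1[of ops _ "[]" Up1] by force
next
  case (2 x)
  show ?case proof (intro allI impI)
    fix i assume A: "i + length (x @ [Up2]) \<le> length ops \<and> sg ops i (i + length (x @ [Up2])) = x @ [Up2]"
    then have d: "sg ops i (i + length x) = x" "ops!(i + length x) = Up2" using sg_dec1 by blast+
    then show "snd (last (St ops (i + length (x @ [Up2])))) \<noteq> [] \<and>
      snd (last (snd (last (St ops (i + length (x @ [Up2])))))) = i"
      using 2 A St_Up2[OF V, of "i + length x"] by simp
  qed
next
  case (3 x y)
  show ?case proof (intro allI impI)
    fix i assume A: "i + length (x @ y @ [Down1]) \<le> length ops \<and> sg ops i (i + length (x @ y @ [Down1])) = x @ y @ [Down1]"
    then have d: "sg ops i (i + length x) = x" "sg ops (i + length x) (i + length x + length y) = y"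
      "ops!(i + length x + length y) = Down1" using sg_dec2 by blast+
    define r where "r = i + length x"
    define e where "e = r + length y"
    have e: "e < length ops" "i + length (x @ y @ [Down1]) = Suc e" using A by (auto simp: e_def r_def)
    have IHx: "snd (last (St ops r)) \<noteq> [] \<and> snd (last (snd (last (St ops r)))) = i"
      using "3.IH"(1) d A r_def by auto
    have IHy: "snd (last (St ops e)) \<noteq> [] \<and> snd (last (snd (last (St ops e)))) = r"
      using "3.IH"(2)[rule_format, of r] d A r_def e_def by auto
    have s: "snd (last (St ops (Suc e))) = butlast (snd (last (St ops e)))"
      using St_Down1[OF V e(1)] d(3) by (simp add: e_def r_def)
    have "butlast (snd (last (St ops e))) = snd (last (St ops r))"
      using inv_top_entry[OF IS[OF V, of e] ] IHy e(1) by simp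
    then show "snd (last (St ops (i + length (x @ y @ [Down1])))) \<noteq> [] \<and>
      snd (last (snd (last (St ops (i + length (x @ y @ [Down1])))))) = i"
      using s IHx e(2) by simp
  qed
next
  case (4 x y)
  show ?case proof (intro allI impI)
    fix i assume A: "i + length (x @ y @ [Down2]) \<le> length ops \<and> sg ops i (i + length (x @ y @ [Down2])) = x @ y @ [Down2]"
    then have d: "sg ops i (i + length x) = x" "sg ops (i + length x) (i + length x + length y) = y"
      "ops!(i + length x + length y) = Down2" using sg_dec2 by blast+
    define r where "r = i + length x"
    define e where "e = r + length y"
    have e: "e < length ops" "i + length (x @ y @ [Down2]) = Suc e" using A by (auto simp: e_def r_def)
    have IHx: "snd (last (St ops r)) \<noteq> [] \<and> snd (last (snd (last (St ops r)))) = i"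
      using "4.IH"(1) d A r_def by auto
    have IHy: "fst (last (St ops e)) = int r"
      using "4.IH"(2)[rule_format, of r] d A r_def e_def by auto
    have s: "St ops (Suc e) = butlast (St ops e)"
      using St_Down2[OF V e(1)] d(3) by (simp add: e_def r_def)
    have "butlast (St ops e) = St ops r"
      using inv_top_tag[OF IS[OF V, of e] inv_tag_len[OF IS[OF V, of e]]] IHy e(1) by fastforce
    then show "snd (last (St ops (i + length (x @ y @ [Down2])))) \<noteq> [] \<and>
      snd (last (snd (last (St ops (i + length (x @ y @ [Down2])))))) = i"
      using s IHx e(2) by simp
  qed
next
  case (5 x y z)
  show ?case proof (intro allI impI)
    fix i assume A: "i + length (x @ y @ z @ [Collapse]) \<le> length ops \<and> sg ops i (i + length (x @ y @ z @ [Collapse])) = x @ y @ z @ [Collapse]"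
    then have d: "sg ops i (i + length x) = x" "sg ops (i + length x) (i + length x + length y) = y"
      "sg ops (i + length x + length y) (i + length x + length y + length z) = z"
      "ops!(i + length x + length y + length z) = Collapse" using sg_dec3 by blast+
    define r where "r = i + length x"
    define s where "s = r + length y"
    define e where "e = s + length z"
    have e: "e < length ops" "i + length (x @ y @ z @ [Collapse]) = Suc e" using A by (auto simp: e_def r_def s_def)
    have IHx: "snd (last (St ops r)) \<noteq> [] \<and> snd (last (snd (last (St ops r)))) = i"
      using "5.IH"(1) d A r_def by auto
    have IHy: "fst (last (St ops s)) = int r"
      using "5.IH"(2)[rule_format, of r] d A r_def s_def by auto
    have IHz: "snd (last (St ops e)) \<noteq> [] \<and> snd (last (snd (last (St ops e)))) = s"
      using "5.IH"(3)[rule_format, of s] d A r_def e_def s_def by auto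
    have st: "St ops (Suc e) = take (fst (last (snd (last (St ops e))))) (St ops e)"
      using St_Collapse[OF V e(1)] d(4) by (simp add: e_def r_def s_def)
    have "take (fst (last (snd (last (St ops e))))) (St ops e) = butlast (St ops s)"
      using inv_top_entry[OF IS[OF V, of e]] IHz e(1) by simp
    moreover have "butlast (St ops s) = St ops r"
      using inv_top_tag[OF IS[OF V, of s] inv_tag_len[OF IS[OF V, of s]]] IHy e(1) s_def e_def by fastforce
    ultimately show "snd (last (St ops (i + length (x @ y @ z @ [Collapse])))) \<noteq> [] \<and>
      snd (last (snd (last (St ops (i + length (x @ y @ z @ [Collapse])))))) = i"
      using st IHx e(2) by simp
  qed
next
  case 6
  then show ?case using St_Up2[OF V] sg_dec1[of ops _ "[]" Up2] by force
next
  case (7 x)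
  show ?case proof (intro allI impI)
    fix i assume A: "i + length (x @ [Up1]) \<le> length ops \<and> sg ops i (i + length (x @ [Up1])) = x @ [Up1]"
    then have d: "sg ops i (i + length x) = x" "ops!(i + length x) = Up1" using sg_dec1 by blast+
    then show "fst (last (St ops (i + length (x @ [Up1])))) = int i"
      using 7 A St_Up1[OF V, of "i + length x"] by simp
  qed
next
  case (8 x)
  show ?case proof (intro allI impI)
    fix i assume A: "i + length (x @ [Down1]) \<le> length ops \<and> sg ops i (i + length (x @ [Down1])) = x @ [Down1]"
    then have d: "sg ops i (i + length x) = x" "ops!(i + length x) = Down1" using sg_dec1 by blast+
    then show "fst (last (St ops (i + length (x @ [Down1])))) = int i"
      using 8 A St_Down1[OF V, of "i + length x"] by simp
  qed
next
  case (9 x y)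
  show ?case proof (intro allI impI)
    fix i assume A: "i + length (x @ y @ [Down2]) \<le> length ops \<and> sg ops i (i + length (x @ y @ [Down2])) = x @ y @ [Down2]"
    then have d: "sg ops i (i + length x) = x" "sg ops (i + length x) (i + length x + length y) = y"
      "ops!(i + length x + length y) = Down2" using sg_dec2 by blast+
    define r where "r = i + length x"
    define e where "e = r + length y"
    have e: "e < length ops" "i + length (x @ y @ [Down2]) = Suc e" using A by (auto simp: e_def r_def)
    have IHx: "fst (last (St ops r)) = int i"
      using "9.IH"(1) d A r_def by auto
    have IHy: "fst (last (St ops e)) = int r"
      using "9.IH"(2)[rule_format, of r] d A r_def e_def by auto
    have s: "St ops (Suc e) = butlast (St ops e)"
      using St_Down2[OF V e(1)] d(3) by (simp add: e_def r_def)
    have "butlast (St ops e) = St ops r"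
      using inv_top_tag[OF IS[OF V, of e] inv_tag_len[OF IS[OF V, of e]]] IHy e(1) by fastforce
    then show "fst (last (St ops (i + length (x @ y @ [Down2])))) = int i"
      using s IHx e(2) by simp
  qed
next
  case (10 x y z)
  show ?case proof (intro allI impI)
    fix i assume A: "i + length (x @ y @ z @ [Collapse]) \<le> length ops \<and> sg ops i (i + length (x @ y @ z @ [Collapse])) = x @ y @ z @ [Collapse]"
    then have d: "sg ops i (i + length x) = x" "sg ops (i + length x) (i + length x + length y) = y"
      "sg ops (i + length x + length y) (i + length x + length y + length z) = z"
      "ops!(i + length x + length y + length z) = Collapse" using sg_dec3 by blast+
    define r where "r = i + length x"
    define s where "s = r + length y"
    define e where "e = s + length z"
    have e: "e < length ops" "i + length (x @ y @ z @ [Collapse]) = Suc e" using A by (auto simp: e_def r_def s_def)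
    have IHx: "fst (last (St ops r)) = int i"
      using "10.IH"(1) d A r_def by auto
    have IHy: "fst (last (St ops s)) = int r"
      using "10.IH"(2)[rule_format, of r] d A r_def s_def by auto
    have IHz: "snd (last (St ops e)) \<noteq> [] \<and> snd (last (snd (last (St ops e)))) = s"
      using "10.IH"(3)[rule_format, of s] d A r_def e_def s_def by auto
    have st: "St ops (Suc e) = take (fst (last (snd (last (St ops e))))) (St ops e)"
      using St_Collapse[OF V e(1)] d(4) by (simp add: e_def r_def s_def)
    have "take (fst (last (snd (last (St ops e))))) (St ops e) = butlast (St ops s)"
      using inv_top_entry[OF IS[OF V, of e]] IHz e(1) by simp
    moreover have "butlast (St ops s) = St ops r"
      using inv_top_tag[OF IS[OF V, of s] inv_tag_len[OF IS[OF V, of s]]] IHy e(1) s_def e_def by fastforce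
    ultimately show "fst (last (St ops (i + length (x @ y @ z @ [Collapse])))) = int i"
      using st IHx e(2) by simp
  qed
qed

end



context
  fixes ops :: "op list"
  assumes V: "valid ops"
begin

lemma complete:
  "k \<le> length ops \<Longrightarrow> (snd (last (St ops k)) \<noteq> [] \<longrightarrow> L1 (sg ops (snd (last (snd (last (St ops k))))) k))
     \<and> (\<forall>t. fst (last (St ops k)) = int t \<longrightarrow> L2 (sg ops t k))"
proof (induction k rule: less_induct)
  case (less k)
  have IH1: "\<And>q. q < k \<Longrightarrow> snd (last (St ops q)) \<noteq> [] \<Longrightarrow> L1 (sg ops (snd (last (snd (last (St ops q))))) q)"
    using less by simp
  have IH2: "\<And>q t. q < k \<Longrightarrow> fst (last (St ops q)) = int t \<Longrightarrow> L2 (sg ops t q)"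
    using less by simp
  have Ent: "\<And>q. q \<le> length ops \<Longrightarrow> snd (last (St ops q)) \<noteq> [] \<Longrightarrow>
     snd (last (snd (last (St ops q)))) < q \<and> butlast (snd (last (St ops q))) = snd (last (St ops (snd (last (snd (last (St ops q)))))))
     \<and> take (fst (last (snd (last (St ops q))))) (St ops q) = butlast (St ops (snd (last (snd (last (St ops q))))))"
    using inv_top_entry IS[OF V] by blast
  have Tag: "\<And>q t. q \<le> length ops \<Longrightarrow> fst (last (St ops q)) = int t \<Longrightarrow> t < q \<and> butlast (St ops q) = St ops t"
    using inv_top_tag inv_tag_len IS[OF V] by (metis of_nat_eq_iff)
  have Tag2: "\<And>q. q \<le> length ops \<Longrightarrow> 2 \<le> length (St ops q) \<Longrightarrow> \<exists>t<q. fst (last (St ops q)) = int t \<and> butlast (St ops q) = St ops t"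
    using inv_top_tag IS[OF V] by blast
  show ?case
  proof (cases k)
    case 0
    then show ?thesis by (simp add: St_0 empty2_def)
  next
    case (Suc j)
    have j: "j < length ops" using Suc less.prems by simp
    show ?thesis
    proof (cases "ops!j")
      case Up1
      note st = St_Up1[OF V j Up1]
      have "L1 (sg ops j k)" using sg_snoc[of j j ops] j Up1 Suc L1_L2.intros(1) by (simp add: sg_def)
      moreover have "L2 (sg ops t k)" if "fst (last (St ops k)) = int t" for t
      proof -
        have "fst (last (St ops j)) = int t" using that st Suc by simp
        then have "t < j" "L2 (sg ops t j)" using Tag[of j t] IH2[of j t] j Suc by auto
        then show ?thesis using sg_snoc[of t j ops] j Up1 Suc L1_L2.intros(7) by simp
      qed
      ultimately show ?thesis using st Suc by simp
    next
      case Up2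
      note st = St_Up2[OF V j Up2]
      have "L1 (sg ops (snd (last (snd (last (St ops k))))) k)" if "snd (last (St ops k)) \<noteq> []"
      proof -
        let ?p = "snd (last (snd (last (St ops j))))"
        have ne: "snd (last (St ops j)) \<noteq> []" using that st Suc by simp
        have "?p < j" "L1 (sg ops ?p j)" using Ent[of j] IH1[of j] ne j Suc by auto
        then have "L1 (sg ops ?p k)" using sg_snoc[of ?p j ops] j Up2 Suc L1_L2.intros(2) by simp
        then show ?thesis using st Suc by simp
      qed
      moreover have "L2 (sg ops t k)" if "fst (last (St ops k)) = int t" for t
      proof -
        have "t = j" using that st Suc by simp
        then show ?thesis using sg_snoc[of j j ops] j Up2 Suc L1_L2.intros(6) by (simp add: sg_def)
      qed
      ultimately show ?thesis by blast
    next
      case Down1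
      note st = St_Down1[OF V j Down1]
      let ?q = "snd (last (snd (last (St ops j))))"
      have q: "?q < j" "L1 (sg ops ?q j)" "butlast (snd (last (St ops j))) = snd (last (St ops ?q))"
        using Ent[of j] IH1[of j] st j Suc by auto
      have "L1 (sg ops (snd (last (snd (last (St ops k))))) k)" if "snd (last (St ops k)) \<noteq> []"
      proof -
        have tw: "snd (last (St ops k)) = snd (last (St ops ?q))" using st q Suc by simp
        let ?p = "snd (last (snd (last (St ops ?q))))"
        have "?p < ?q" "L1 (sg ops ?p ?q)" using Ent[of ?q] IH1[of ?q] that tw q j Suc by auto
        moreover have "sg ops ?p k = sg ops ?p ?q @ sg ops ?q j @ [Down1]"
          using sg_app[of ?p ?q j ops] sg_snoc[of ?p j ops] \<open>?p < ?q\<close> q j Suc Down1 by simp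
        ultimately show ?thesis using q L1_L2.intros(3) tw by simp
      qed
      moreover have "L2 (sg ops t k)" if "fst (last (St ops k)) = int t" for t
      proof -
        have "fst (last (St ops j)) = int t" using that st Suc by simp
        then have "t < j" "L2 (sg ops t j)" using Tag[of j t] IH2[of j t] j Suc by auto
        then show ?thesis using sg_snoc[of t j ops] j Down1 Suc L1_L2.intros(8) by simp
      qed
      ultimately show ?thesis by blast
    next
      case Down2
      note st = St_Down2[OF V j Down2]
      obtain t0 where t0: "t0 < j" "fst (last (St ops j)) = int t0" "butlast (St ops j) = St ops t0"
        using Tag2[of j] st j by auto
      have L2j: "L2 (sg ops t0 j)" using IH2[of j t0] t0 Suc by simp
      have Sk: "St ops k = St ops t0" using st t0 Suc by simp
      have "L1 (sg ops (snd (last (snd (last (St ops k))))) k)" if "snd (last (St ops k)) \<noteq> []"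
      proof -
        let ?p = "snd (last (snd (last (St ops t0))))"
        have "?p < t0" "L1 (sg ops ?p t0)" using Ent[of t0] IH1[of t0] that Sk t0 j Suc by auto
        moreover have "sg ops ?p k = sg ops ?p t0 @ sg ops t0 j @ [Down2]"
          using sg_app[of ?p t0 j ops] sg_snoc[of ?p j ops] \<open>?p < t0\<close> t0 j Suc Down2 by simp
        ultimately show ?thesis using L2j L1_L2.intros(4) Sk by simp
      qed
      moreover have "L2 (sg ops t k)" if "fst (last (St ops k)) = int t" for t
      proof -
        have "t < t0" "L2 (sg ops t t0)" using Tag[of t0 t] IH2[of t0 t] that Sk t0 j Suc by auto
        moreover have "sg ops t k = sg ops t t0 @ sg ops t0 j @ [Down2]"
          using sg_app[of t t0 j ops] sg_snoc[of t j ops] \<open>t < t0\<close> t0 j Suc Down2 by simp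
        ultimately show ?thesis using L2j L1_L2.intros(9) by simp
      qed
      ultimately show ?thesis by blast
    next
      case Collapse
      note st = St_Collapse[OF V j Collapse]
      let ?s = "snd (last (snd (last (St ops j))))"
      have s: "?s < j" "L1 (sg ops ?s j)" "take (fst (last (snd (last (St ops j))))) (St ops j) = butlast (St ops ?s)"
        using Ent[of j] IH1[of j] st j Suc by auto
      have "St ops k \<noteq> []" using S_ne[OF V] less.prems by simp
      then have "butlast (St ops ?s) \<noteq> []" using s st Suc by simp
      then have "2 \<le> length (St ops ?s)" by (cases "St ops ?s" rule: rev_cases) (auto simp: Suc_le_eq)
      then obtain t0 where t0: "t0 < ?s" "fst (last (St ops ?s)) = int t0" "butlast (St ops ?s) = St ops t0"
        using Tag2[of ?s] s j by auto
      have L2s: "L2 (sg ops t0 ?s)" using IH2[of ?s t0] t0 s Suc by simp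
      have Sk: "St ops k = St ops t0" using st s t0 Suc by simp
      have "L1 (sg ops (snd (last (snd (last (St ops k))))) k)" if "snd (last (St ops k)) \<noteq> []"
      proof -
        let ?p = "snd (last (snd (last (St ops t0))))"
        have "?p < t0" "L1 (sg ops ?p t0)" using Ent[of t0] IH1[of t0] that Sk t0 s j Suc by auto
        moreover have "sg ops ?p k = sg ops ?p t0 @ sg ops t0 ?s @ sg ops ?s j @ [Collapse]"
          using sg_app[of ?p t0 ?s ops] sg_app[of ?p ?s j ops] sg_snoc[of ?p j ops] \<open>?p < t0\<close> t0 s j Suc Collapse by (simp, metis append.assoc)
        ultimately show ?thesis using L2s s L1_L2.intros(5) Sk by simp
      qed
      moreover have "L2 (sg ops t k)" if "fst (last (St ops k)) = int t" for t
      proof -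
        have "t < t0" "L2 (sg ops t t0)" using Tag[of t0 t] IH2[of t0 t] that Sk t0 s j Suc by auto
        moreover have "sg ops t k = sg ops t t0 @ sg ops t0 ?s @ sg ops ?s j @ [Collapse]"
          using sg_app[of t t0 ?s ops] sg_app[of t ?s j ops] sg_snoc[of t j ops] \<open>t < t0\<close> t0 s j Suc Collapse by (simp, metis append.assoc)
        ultimately show ?thesis using L2s s L1_L2.intros(10) by simp
      qed
      ultimately show ?thesis by blast
    qed
  qed
qed

end



theorem proposition1:
  fixes ops :: "op list"
  assumes "ops \<noteq> []" and "valid ops"
  shows "\<forall>i j. i \<le> j \<and> j < length ops \<longrightarrow>
      (push1 ops j = int i \<longleftrightarrow> L1 (seg ops i j)) \<and>
      (Push2 ops j = int i \<longleftrightarrow> L2 (seg ops i j)) \<and>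
      (push1 ops j = -1 \<longleftrightarrow> (\<forall>k\<le>j. \<not> L1 (seg ops k j))) \<and>
      (Push2 ops j = -1 \<longleftrightarrow> (\<forall>k\<le>j. \<not> L2 (seg ops k j)))"
proof (intro allI impI)
  fix i j assume ij: "i \<le> j \<and> j < length ops"
  note V = assms(2)
  define k where "k = Suc j"
  have k: "k \<le> length ops" using ij k_def by simp
  have sa: "state_after ops j = St ops k" by (simp add: state_after_def St_def k_def)
  have sgq: "\<And>a. seg ops a j = sg ops a k" by (simp add: seg_def sg_def k_def)
  have p1: "push1 ops j = (if snd (last (St ops k)) = [] then -1 else int (snd (last (snd (last (St ops k))))))"
    by (simp add: push1_def sa Let_def)
  have p2: "Push2 ops j = (if length (St ops k) = 1 then -1 else fst (last (St ops k)))"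
    by (simp add: Push2_def sa Let_def)
  have I: "inv (St ops) k (St ops k)" using IS[OF V k] .
  have len1: "length (St ops k) = 1 \<Longrightarrow> fst (last (St ops k)) = -1" using inv_len1[OF I] .
  have sl: "\<And>a. a \<le> j \<Longrightarrow> a + length (sg ops a k) = k" using sg_len[OF k] k_def by simp
  have S1: "\<And>a. a \<le> j \<Longrightarrow> L1 (sg ops a k) \<Longrightarrow> push1 ops j = int a"
  proof -
    fix a assume a: "a \<le> j" "L1 (sg ops a k)"
    have "snd (last (St ops k)) \<noteq> [] \<and> snd (last (snd (last (St ops k)))) = a"
      using sound(1)[OF V a(2), rule_format, of a] sl[OF a(1)] k by simp
    then show "push1 ops j = int a" using p1 by simp
  qed
  have S2: "\<And>a. a \<le> j \<Longrightarrow> L2 (sg ops a k) \<Longrightarrow> Push2 ops j = int a"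
  proof -
    fix a assume a: "a \<le> j" "L2 (sg ops a k)"
    have f: "fst (last (St ops k)) = int a"
      using sound(2)[OF V a(2), rule_format, of a] sl[OF a(1)] k by simp
    then have "length (St ops k) \<noteq> 1" using len1 by auto
    then show "Push2 ops j = int a" using p2 f by simp
  qed
  have C1: "\<And>a. push1 ops j = int a \<Longrightarrow> L1 (sg ops a k)"
  proof -
    fix a assume a: "push1 ops j = int a"
    then have "snd (last (St ops k)) \<noteq> []" "snd (last (snd (last (St ops k)))) = a" using p1 by (auto split: if_splits)
    then show "L1 (sg ops a k)" using complete[OF V k] by auto
  qed
  have C2: "\<And>a. Push2 ops j = int a \<Longrightarrow> L2 (sg ops a k)"
  proof -
    fix a assume a: "Push2 ops j = int a"
    then have "fst (last (St ops k)) = int a" using p2 by (auto split: if_splits)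
    then show "L2 (sg ops a k)" using complete[OF V k] by auto
  qed
  have P3: "push1 ops j = -1 \<longleftrightarrow> (\<forall>k'\<le>j. \<not> L1 (seg ops k' j))"
  proof
    assume m: "push1 ops j = -1" show "\<forall>k'\<le>j. \<not> L1 (seg ops k' j)"
    proof (intro allI impI notI)
      fix k' assume "k' \<le> j" "L1 (seg ops k' j)"
      then have "push1 ops j = int k'" using S1[of k'] sgq[of k'] by simp
      then show False using m by simp
    qed
  next
    assume A: "\<forall>k'\<le>j. \<not> L1 (seg ops k' j)"
    show "push1 ops j = -1"
    proof (rule ccontr)
      assume "push1 ops j \<noteq> -1"
      then have ne: "snd (last (St ops k)) \<noteq> []" using p1 by (auto split: if_splits)
      then have "snd (last (snd (last (St ops k)))) < k" using inv_top_entry[OF I] by blast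
      moreover have "push1 ops j = int (snd (last (snd (last (St ops k)))))" using p1 ne by simp
      ultimately have "L1 (seg ops (snd (last (snd (last (St ops k))))) j)" "snd (last (snd (last (St ops k)))) \<le> j"
        using C1 sgq k_def by auto
      then show False using A by blast
    qed
  qed
  have P4: "Push2 ops j = -1 \<longleftrightarrow> (\<forall>k'\<le>j. \<not> L2 (seg ops k' j))"
  proof
    assume m: "Push2 ops j = -1" show "\<forall>k'\<le>j. \<not> L2 (seg ops k' j)"
    proof (intro allI impI notI)
      fix k' assume "k' \<le> j" "L2 (seg ops k' j)"
      then have "Push2 ops j = int k'" using S2[of k'] sgq[of k'] by simp
      then show False using m by simp
    qed
  next
    assume A: "\<forall>k'\<le>j. \<not> L2 (seg ops k' j)"
    show "Push2 ops j = -1"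
    proof (rule ccontr)
      assume "Push2 ops j \<noteq> -1"
      then have l: "length (St ops k) \<noteq> 1" using p2 by (auto split: if_splits)
      have "St ops k \<noteq> []" using I unfolding inv_def by simp
      with l have "2 \<le> length (St ops k)" by (cases "St ops k") (auto simp: Suc_le_eq)
      then obtain t where t: "t < k" "fst (last (St ops k)) = int t" using inv_top_tag[OF I] by blast
      then have "Push2 ops j = int t" using p2 l by simp
      then have "L2 (seg ops t j)" "t \<le> j" using C2[of t] sgq[of t] k_def t by auto
      then show False using A by blast
    qed
  qed
  show "(push1 ops j = int i \<longleftrightarrow> L1 (seg ops i j)) \<and>
      (Push2 ops j = int i \<longleftrightarrow> L2 (seg ops i j)) \<and>
      (push1 ops j = -1 \<longleftrightarrow> (\<forall>k\<le>j. \<not> L1 (seg ops k j))) \<and>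
      (Push2 ops j = -1 \<longleftrightarrow> (\<forall>k\<le>j. \<not> L2 (seg ops k j)))"
  proof (intro conjI)
    show "push1 ops j = int i \<longleftrightarrow> L1 (seg ops i j)" using S1[of i] C1[of i] sgq[of i] ij by auto
    show "Push2 ops j = int i \<longleftrightarrow> L2 (seg ops i j)" using S2[of i] C2[of i] sgq[of i] ij by auto
  qed (use P3 P4 in auto)
qed


end
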